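(* The hereditary class property $\Delta_\omega$ = "bounded maximum degree after deletion of a bounded number of vertices" — the set of hereditary classes $\mathscr C$ for which there are integers $k,d$ such that every $G\in\mathscr C$ has a set $S$ of at most $k$ vertices with $G-S$ of maximum degree at most $d$ — is a decomposition horizon.
   Context: Graphs are finite and simple. A hereditary class is a class closed under isomorphism and induced subgraphs; a hereditary class property is a set $\Pi$ of hereditary classes closed under passing to hereditary subclasses. For non-decreasing $f$ and positive integer $p$, $\mathscr C$ has an $f$-bounded $\Pi$-decomposition with parameter $p$ if there is $\mathscr D_p\in\Pi$ such that every $G\in\mathscr C$ has a partition $V_1,\dots,V_N$ of $V(G)$ with $N\le f(|G|)$ and $G[V_{i_1}\cup\dots\cup V_{i_p}]\in\mathscr D_p$ for all $i_1,\dots,i_p\in[N]$. $\Pi^\ast$ is the set of hereditary classes that, for every positive integer $p$, have such a decomposition for some non-decreasing $f$ with $f(n)=n^{o(1)}$. $\Pi$ is a decomposition horizon if $\Pi^\ast=\Pi$. *)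

theory Defs
  imports Complex_Main
begin

text \<open>Finite simple graphs, with vertices drawn from nat (every finite graph is
isomorphic to such a graph). A graph is a pair (V, E) of a finite vertex set and a
set of 2-element edges contained in V.\<close>

type_synonym graph = "nat set \<times> nat set set"

definition verts :: "graph \<Rightarrow> nat set" where "verts G = fst G"
definition edges :: "graph \<Rightarrow> nat set set" where "edges G = snd G"

definition wf_graph :: "graph \<Rightarrow> bool" where
  "wf_graph G \<longleftrightarrow> finite (verts G) \<and>
     (\<forall>e\<in>edges G. e \<subseteq> verts G \<and> card e = 2)"

definition induced :: "graph \<Rightarrow> nat set \<Rightarrow> graph" where
  "induced G X = (verts G \<inter> X, {e \<in> edges G. e \<subseteq> X})"

definition graph_iso :: "graph \<Rightarrow> graph \<Rightarrow> bool" where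
  "graph_iso G H \<longleftrightarrow> (\<exists>f. bij_betw f (verts G) (verts H) \<and>
     (\<forall>u\<in>verts G. \<forall>v\<in>verts G. {u, v} \<in> edges G \<longleftrightarrow> {f u, f v} \<in> edges H))"

definition hereditary :: "graph set \<Rightarrow> bool" where
  "hereditary C \<longleftrightarrow> (\<forall>G\<in>C. wf_graph G) \<and>
     (\<forall>G\<in>C. \<forall>H. wf_graph H \<and> graph_iso G H \<longrightarrow> H \<in> C) \<and>
     (\<forall>G\<in>C. \<forall>X. induced G X \<in> C)"

definition hered_property :: "graph set set \<Rightarrow> bool" where
  "hered_property \<Pi> \<longleftrightarrow> (\<forall>C\<in>\<Pi>. hereditary C) \<and>
     (\<forall>C\<in>\<Pi>. \<forall>D. hereditary D \<and> D \<subseteq> C \<longrightarrow> D \<in> \<Pi>)"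

definition has_decomp :: "graph set set \<Rightarrow> graph set \<Rightarrow> (nat \<Rightarrow> real) \<Rightarrow> nat \<Rightarrow> bool" where
  "has_decomp \<Pi> C f p \<longleftrightarrow> (\<exists>D\<in>\<Pi>. \<forall>G\<in>C. \<exists>N::nat. \<exists>P::nat \<Rightarrow> nat set.
      real N \<le> f (card (verts G)) \<and>
      (\<Union>i<N. P i) = verts G \<and>
      (\<forall>i<N. \<forall>j<N. i \<noteq> j \<longrightarrow> P i \<inter> P j = {}) \<and>
      (\<forall>idx::nat \<Rightarrow> nat. (\<forall>j<p. idx j < N) \<longrightarrow> induced G (\<Union>j<p. P (idx j)) \<in> D))"

text \<open>f(n) = n^{o(1)}: for every eps > 0, eventually n^(-eps) <= f n <= n^eps.\<close>
definition subpoly :: "(nat \<Rightarrow> real) \<Rightarrow> bool" where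
  "subpoly f \<longleftrightarrow> (\<forall>\<epsilon>>0. \<forall>\<^sub>F n in sequentially.
      real n powr (-\<epsilon>) \<le> f n \<and> f n \<le> real n powr \<epsilon>)"

definition star :: "graph set set \<Rightarrow> graph set set" where
  "star \<Pi> = {C. hereditary C \<and> (\<forall>p::nat. p \<ge> 1 \<longrightarrow>
      (\<exists>f. mono f \<and> subpoly f \<and> has_decomp \<Pi> C f p))}"

definition decomposition_horizon :: "graph set set \<Rightarrow> bool" where
  "decomposition_horizon \<Pi> \<longleftrightarrow> star \<Pi> = \<Pi>"

definition Delta_omega :: "graph set set" where
  "Delta_omega = {C. hereditary C \<and> (\<exists>k d::nat. \<forall>G\<in>C. \<exists>S \<subseteq> verts G. card S \<le> k \<and>
      (\<forall>v\<in>verts G - S. card {u\<in>verts G - S. {u, v} \<in> edges G} \<le> d))}"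

end

theory Submission
  imports Defs
begin

lemma pigeon:
  assumes "finite A" "finite B" "B \<noteq> {}" "g ` A \<subseteq> B"
  shows "\<exists>b\<in>B. card A \<le> card B * card {x\<in>A. g x = b}"
proof (rule ccontr)
  assume "\<not> ?thesis"
  hence lt: "\<And>b. b \<in> B \<Longrightarrow> card B * card {x\<in>A. g x = b} < card A" by force
  have "card A = (\<Sum>b\<in>B. card {x\<in>A. g x = b})"
  proof -
    have "A = (\<Union>b\<in>B. {x\<in>A. g x = b})" using assms(4) by blast
    hence "card A = card (\<Union>b\<in>B. {x\<in>A. g x = b})" by simp
    also have "\<dots> = (\<Sum>b\<in>B. card {x\<in>A. g x = b})"
      using assms by (intro card_UN_disjoint) auto
    finally show ?thesis .
  qed
  hence "card B * card A = (\<Sum>b\<in>B. card B * card {x\<in>A. g x = b})"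
    by (simp add: sum_distrib_left)
  also have "\<dots> < (\<Sum>b\<in>B. card A)"
    using lt assms by (intro sum_strict_mono) auto
  also have "\<dots> = card B * card A" by simp
  finally show False by simp
qed

lemma verts_induced[simp]: "verts (induced G X) = verts G \<inter> X"
  by (simp add: induced_def verts_def)
lemma edges_induced[simp]: "edges (induced G X) = {e \<in> edges G. e \<subseteq> X}"
  by (simp add: induced_def edges_def)

lemma easy:
  assumes "C \<in> Delta_omega" shows "C \<in> star Delta_omega"
proof -
  have her: "hereditary C" using assms by (simp add: Delta_omega_def)
  have mono: "mono (\<lambda>n::nat. (1::real))" by (simp add: mono_def)
  have sp: "subpoly (\<lambda>n::nat. (1::real))"
    unfolding subpoly_def
  proof (intro allI impI)
    fix e :: real assume e: "e > 0"
    show "\<forall>\<^sub>F n in sequentially. real n powr (-e) \<le> 1 \<and> 1 \<le> real n powr e"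
      unfolding eventually_sequentially
    proof (intro exI[of _ 1] allI impI)
      fix n :: nat assume "1 \<le> n"
      hence n: "(1::real) \<le> real n" by simp
      have a: "1 \<le> real n powr e" using ge_one_powr_ge_zero[OF n] e by simp
      have "real n powr (-e) = inverse (real n powr e)" using n by (simp add: powr_minus)
      thus "real n powr (-e) \<le> 1 \<and> 1 \<le> real n powr e" using a by (simp add: inverse_le_1_iff)
    qed
  qed
  have dec: "has_decomp Delta_omega C (\<lambda>n. 1) p" if "p \<ge> 1" for p
    unfolding has_decomp_def
  proof (intro bexI[of _ C] ballI)
    fix G assume G: "G \<in> C"
    show "\<exists>N P. real N \<le> 1 \<and> (\<Union>i<N. P i) = verts G \<and>
      (\<forall>i<N. \<forall>j<N. i \<noteq> j \<longrightarrow> P i \<inter> P j = {}) \<and>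
      (\<forall>idx. (\<forall>j<p. idx j < N) \<longrightarrow> induced G (\<Union>j<p. P (idx j)) \<in> C)"
      using her G unfolding hereditary_def by (intro exI[of _ 1] exI[of _ "\<lambda>_. verts G"]) auto
  qed (use assms in auto)
  show ?thesis unfolding star_def using her mono sp dec by blast
qed

lemma arith_key:
  fixes N c t :: nat
  assumes "N^8 \<le> 2*t^2" "2*c^4 < t"
  shows "N^2 * c < t"
proof (rule ccontr)
  assume "\<not> ?thesis"
  hence "t \<le> N^2*c" by simp
  hence "t^4 \<le> (N^2*c)^4" by (rule power_mono) simp
  also have "\<dots> = N^8 * c^4"
    by (simp add: power_mult_distrib flip: power_mult)
  also have "\<dots> \<le> 2*t^2*c^4" using assms(1) by simp
  also have "\<dots> = t^2 * (2*c^4)" by simp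
  finally have h: "t^2 * t^2 \<le> t^2 * (2*c^4)"
    by (metis power_add numeral_Bit0 numeral_One one_add_one)
  have "t > 0" using assms(2) by simp
  hence "0 < t^2" by simp
  hence "t^2 \<le> 2*c^4" by (metis h mult_le_cancel1)
  moreover have "t \<le> t^2" by (simp add: power2_eq_square)
  ultimately show False using assms(2) by simp
qed

lemma hard:
  assumes her: "hereditary C" and sp: "subpoly f" and hd: "has_decomp Delta_omega C f 2"
  shows "C \<in> Delta_omega"
proof -
  obtain D where DD: "D \<in> Delta_omega" and dec: "\<forall>G\<in>C. \<exists>N::nat. \<exists>P::nat \<Rightarrow> nat set.
      real N \<le> f (card (verts G)) \<and>
      (\<Union>i<N. P i) = verts G \<and>
      (\<forall>i<N. \<forall>j<N. i \<noteq> j \<longrightarrow> P i \<inter> P j = {}) \<and>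
      (\<forall>idx::nat \<Rightarrow> nat. (\<forall>j<2. idx j < N) \<longrightarrow> induced G (\<Union>j<2. P (idx j)) \<in> D)"
    using hd unfolding has_decomp_def by blast
  obtain k d :: nat where kd: "\<forall>G\<in>D. \<exists>S \<subseteq> verts G. card S \<le> k \<and>
      (\<forall>v\<in>verts G - S. card {u\<in>verts G - S. {u, v} \<in> edges G} \<le> d)"
    using DD unfolding Delta_omega_def by blast
  have "\<forall>\<^sub>F n in sequentially. real n powr (-(1/8)) \<le> f n \<and> f n \<le> real n powr (1/8)"
    using sp unfolding subpoly_def by simp
  then obtain n0 where n0: "\<And>n. n \<ge> n0 \<Longrightarrow> f n \<le> real n powr (1/8)"
    unfolding eventually_sequentially by blast
  define c where "c = k + d + 1"
  define t where "t = max n0 (2*c^4+1)"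
  have t1: "2*c^4 < t" "n0 \<le> t" unfolding t_def by auto
  have tpos: "t \<ge> 1" using t1 by simp
  show ?thesis
  proof (rule ccontr)
    assume nC: "C \<notin> Delta_omega"
    have "\<not> (\<forall>G\<in>C. \<exists>S \<subseteq> verts G. card S \<le> t \<and>
      (\<forall>v\<in>verts G - S. card {u\<in>verts G - S. {u, v} \<in> edges G} \<le> t))"
      using nC her unfolding Delta_omega_def by blast
    then obtain G where GC: "G \<in> C" and bad0: "\<not> (\<exists>S \<subseteq> verts G. card S \<le> t \<and>
      (\<forall>v\<in>verts G - S. card {u\<in>verts G - S. {u, v} \<in> edges G} \<le> t))"
      by blast
    have bad: "\<exists>v\<in>verts G - S. card {u\<in>verts G - S. {u, v} \<in> edges G} > t"
      if "S \<subseteq> verts G" "card S \<le> t" for S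
    proof -
      have "\<not> (\<forall>v\<in>verts G - S. card {u\<in>verts G - S. {u, v} \<in> edges G} \<le> t)"
        using bad0 that by blast
      then obtain v where "v \<in> verts G - S" "\<not> card {u\<in>verts G - S. {u, v} \<in> edges G} \<le> t"
        by blast
      thus ?thesis by (intro bexI[of _ v]) simp_all
    qed
    have wf: "wf_graph G" using her GC unfolding hereditary_def by blast
    have finV: "finite (verts G)" using wf unfolding wf_graph_def by blast
    define nb where "nb v = {u\<in>verts G. {u, v} \<in> edges G}" for v
    define Hi where "Hi = {v\<in>verts G. card (nb v) > t}"
    have "card Hi > t"
    proof (rule ccontr)
      assume "\<not> card Hi > t"
      hence "card Hi \<le> t" by simp
      then obtain v where v: "v \<in> verts G - Hi" and
         c: "card {u\<in>verts G - Hi. {u, v} \<in> edges G} > t"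
        using bad[of Hi] unfolding Hi_def by auto
      have "card {u\<in>verts G - Hi. {u, v} \<in> edges G} \<le> card (nb v)"
        unfolding nb_def by (rule card_mono) (use finV in auto)
      thus False using v c unfolding Hi_def by auto
    qed
    then obtain V0 where V0: "V0 \<subseteq> Hi" "card V0 = t"
      by (meson less_imp_le obtain_subset_with_card_n)
    have "\<forall>v\<in>V0. \<exists>Y. Y \<subseteq> nb v \<and> card Y = t"
    proof
      fix v assume "v \<in> V0"
      hence "t \<le> card (nb v)" using V0 unfolding Hi_def by auto
      thus "\<exists>Y. Y \<subseteq> nb v \<and> card Y = t" using obtain_subset_with_card_n by metis
    qed
    then obtain Nb where Nb: "\<And>v. v \<in> V0 \<Longrightarrow> Nb v \<subseteq> nb v \<and> card (Nb v) = t"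
      by (rule bchoice[THEN exE]) blast
    have finV0: "finite V0" using V0 tpos by (metis card.infinite not_one_le_zero)
    define X where "X = V0 \<union> (\<Union>v\<in>V0. Nb v)"
    have XV: "X \<subseteq> verts G" using Nb V0 unfolding X_def Hi_def nb_def by blast
    have finX: "finite X" using XV finV finite_subset by blast
    have "card X \<le> card V0 + card (\<Union>v\<in>V0. Nb v)" unfolding X_def by (rule card_Un_le)
    also have "card (\<Union>v\<in>V0. Nb v) \<le> (\<Sum>v\<in>V0. card (Nb v))" by (rule card_UN_le[OF finV0])
    also have "(\<Sum>v\<in>V0. card (Nb v)) = t * t" using Nb V0 by simp
    finally have cX1: "card X \<le> t + t * t" using V0 by simp
    have "t \<le> t * t" by (rule le_square)
    hence cX: "card X \<le> 2 * t^2" unfolding power2_eq_square using cX1 by linarith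
    have "t \<le> card X" using V0 card_mono[OF finX, of V0] unfolding X_def by auto
    hence cX0: "card X \<ge> n0" using t1 by simp
    define H where "H = induced G X"
    have HC: "H \<in> C" using her GC unfolding hereditary_def H_def by blast
    have vH: "verts H = X" using XV unfolding H_def by auto
    obtain N P where NP0: "real N \<le> f (card (verts H))" "(\<Union>i<N. P i) = verts H"
      and Pd0: "\<forall>idx::nat \<Rightarrow> nat. (\<forall>j<2. idx j < N) \<longrightarrow> induced H (\<Union>j<2. P (idx j)) \<in> D"
      using bspec[OF dec HC] by (elim exE conjE) (rule that)
    have NP: "real N \<le> f (card X)" "(\<Union>i<N. P i) = X" using NP0 vH by simp_all
    have Pd: "\<And>idx. (\<forall>j<(2::nat). idx j < N) \<Longrightarrow> induced H (\<Union>j<(2::nat). P (idx j)) \<in> D"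
      using Pd0 by blast
    have "X \<noteq> {}" using V0 tpos unfolding X_def by auto
    have "N \<noteq> 0"
    proof
      assume "N = 0"
      hence "(\<Union>i<N. P i) = {}" by simp
      thus False using NP(2) \<open>X \<noteq> {}\<close> by simp
    qed
    hence Npos: "N \<ge> 1" by simp
    have "0 \<in> {..<N}" using Npos by simp
    hence Ne: "{..<N} \<noteq> {}" by blast
    hence Ne2: "{..<N} \<times> {..<N} \<noteq> {}" by simp
    have "real N \<le> real (card X) powr (1/8)" using NP(1) n0[OF cX0] by simp
    hence "real N ^ 8 \<le> (real (card X) powr (1/8)) ^ 8" by (rule power_mono) simp
    also have "\<dots> = (real (card X) powr (1/8)) powr (real (8::nat))"
      by (rule powr_realpow'[symmetric]) simp_all
    also have "\<dots> = real (card X)" by (simp add: powr_powr)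
    finally have "real (N^8) \<le> real (card X)" by simp
    hence "N^8 \<le> card X" by (simp only: of_nat_le_iff)
    hence N8: "N^8 \<le> 2*t^2" using cX by simp
    have key: "N^2 * c < t" by (rule arith_key[OF N8 t1(1)])
    define pidx where "pidx u = (SOME i. i < N \<and> u \<in> P i)" for u
    have pidx: "pidx u < N \<and> u \<in> P (pidx u)" if "u \<in> X" for u
    proof -
      have "\<exists>i. i < N \<and> u \<in> P i" using that NP(2) by blast
      thus ?thesis unfolding pidx_def by (rule someI_ex)
    qed
    have "\<forall>v\<in>V0. \<exists>a\<in>{..<N}. card (Nb v) \<le> card {..<N} * card {u\<in>Nb v. pidx u = a}"
    proof
      fix v assume v: "v \<in> V0"
      have "Nb v \<subseteq> X" using v unfolding X_def by blast
      moreover have "finite (Nb v)" using Nb[OF v] tpos by (metis card.infinite not_one_le_zero)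
      ultimately show "\<exists>a\<in>{..<N}. card (Nb v) \<le> card {..<N} * card {u\<in>Nb v. pidx u = a}"
        using Ne pidx by (intro pigeon) auto
    qed
    hence "\<forall>v\<in>V0. \<exists>a. a < N \<and> t \<le> N * card {u\<in>Nb v. pidx u = a}"
      using Nb by auto
    then obtain a where a: "\<And>v. v \<in> V0 \<Longrightarrow> a v < N \<and> t \<le> N * card {u\<in>Nb v. pidx u = a v}"
      by (rule bchoice[THEN exE]) blast
    have "\<exists>b\<in>{..<N} \<times> {..<N}. card V0 \<le> card ({..<N} \<times> {..<N}) * card {v\<in>V0. (pidx v, a v) = b}"
      using Ne2 pidx a finV0 unfolding X_def by (intro pigeon) auto
    then obtain b0 a0 where b0a0: "b0 < N" "a0 < N"
      and F: "t \<le> N * N * card {v\<in>V0. (pidx v, a v) = (b0, a0)}"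
      using V0 by (auto simp: card_cartesian_product)
    define F where "F = {v\<in>V0. pidx v = b0 \<and> a v = a0}"
    have cF: "t \<le> N * N * card F" using F unfolding F_def by simp
    define idx where "idx j = (if j = 0 then b0 else a0)" for j :: nat
    have W: "(\<Union>j<(2::nat). P (idx j)) = P b0 \<union> P a0"
      unfolding idx_def by (auto simp: lessThan_nat_numeral)
    define H' where "H' = induced H (P b0 \<union> P a0)"
    have "H' \<in> D" using Pd[of idx] b0a0 W unfolding H'_def idx_def by auto
    obtain S where S: "S \<subseteq> verts H'" "card S \<le> k"
      and Sd0: "\<forall>v\<in>verts H' - S. card {u\<in>verts H' - S. {u, v} \<in> edges H'} \<le> d"
      using bspec[OF kd \<open>H' \<in> D\<close>] by (elim exE conjE) (rule that)
    have Sd: "\<And>v. v \<in> verts H' - S \<Longrightarrow> card {u\<in>verts H' - S. {u, v} \<in> edges H'} \<le> d"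
      using Sd0 by (rule bspec)
    have vH': "verts H' = X \<inter> (P b0 \<union> P a0)" unfolding H'_def using vH by simp
    have eH': "edges H' = {e \<in> edges G. e \<subseteq> X \<and> e \<subseteq> P b0 \<union> P a0}"
      unfolding H'_def H_def by auto
    have "S \<subseteq> X" using S(1) vH' by blast
    hence finS: "finite S" using finX by (rule finite_subset)
    have kk: "N * N * c < t" using key by (simp add: power2_eq_square)
    hence "N * N * c < N * N * card F" using cF by linarith
    hence "card F > c" by simp
    hence "card F > card S" using S(2) unfolding c_def by simp
    have "\<not> F \<subseteq> S"
    proof
      assume "F \<subseteq> S"
      hence "card F \<le> card S" by (rule card_mono[OF finS])
      thus False using \<open>card F > card S\<close> by simp
    qed
    then obtain v where vF: "v \<in> F" and vS: "v \<notin> S" by blast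
    have vV0: "v \<in> V0" using vF unfolding F_def by simp
    have vX: "v \<in> X" using vV0 unfolding X_def by simp
    have "v \<in> P b0" using pidx[OF vX] vF unfolding F_def by simp
    hence vH'S: "v \<in> verts H' - S" using vX vS vH' by simp
    define Y where "Y = {u\<in>Nb v. pidx u = a0}"
    have cY: "t \<le> N * card Y" using a[OF vV0] vF unfolding F_def Y_def by simp
    have "N * c \<le> N * N * c" using Npos by simp
    hence "N * c < N * card Y" using cY kk by linarith
    hence cYc: "card Y > c" by simp
    have "Y - S \<subseteq> {u\<in>verts H' - S. {u, v} \<in> edges H'}"
    proof
      fix u assume u: "u \<in> Y - S"
      have uX: "u \<in> X" using u vV0 unfolding Y_def X_def by blast
      have uP: "u \<in> P a0" using u pidx[OF uX] unfolding Y_def by simp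
      have "u \<in> nb v" using u Nb[OF vV0] unfolding Y_def by blast
      hence "{u, v} \<in> edges G" unfolding nb_def by simp
      moreover have "v \<in> P b0" using pidx[OF vX] vF unfolding F_def by simp
      ultimately show "u \<in> {u\<in>verts H' - S. {u, v} \<in> edges H'}"
        using u uX uP vX vH' eH' by auto
    qed
    moreover have "finite {u\<in>verts H' - S. {u, v} \<in> edges H'}"
      using vH' finX by simp
    ultimately have "card (Y - S) \<le> card {u\<in>verts H' - S. {u, v} \<in> edges H'}"
      by (intro card_mono)
    hence "card (Y - S) \<le> d" using Sd[OF vH'S] by (rule le_trans)
    moreover have "card Y - card S \<le> card (Y - S)" by (rule diff_card_le_card_Diff[OF finS])
    ultimately show False using cYc S(2) unfolding c_def by simp
  qed
qed

theorem mainTheorem15: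
  shows "decomposition_horizon Delta_omega"
  unfolding decomposition_horizon_def
proof
  show "star Delta_omega \<subseteq> Delta_omega"
  proof
    fix C assume "C \<in> star Delta_omega"
    hence her: "hereditary C" and
      ex: "\<exists>f. mono f \<and> subpoly f \<and> has_decomp Delta_omega C f 2"
      unfolding star_def by auto
    from ex obtain f where "subpoly f" "has_decomp Delta_omega C f 2" by blast
    thus "C \<in> Delta_omega" using hard her by blast
  qed
  show "Delta_omega \<subseteq> star Delta_omega" using easy by blast
qed

end
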